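(* There is some real $\alpha>1/2$ and an open subset $U\subseteq\mathbb{C}$ such that $\mathcal{M}\cap U$ is equal to the interval $[1/2,\alpha)$.
   Context: For $z\in\mathbb{D}^*=\{0<|z|<1\}$, $f(x)=zx$, $g(x)=z(x-1)+1$, $\Lambda_z$ is the unique nonempty compact subset of $\mathbb{C}$ with $\Lambda_z=f(\Lambda_z)\cup g(\Lambda_z)$, and $\mathcal{M}=\{z\in\mathbb{D}^*:\Lambda_z\text{ connected}\}$. *)

theory Defs
  imports "HOL-Analysis.Analysis"
begin

definition attractor :: "complex \<Rightarrow> complex set" where
  "attractor z = (THE L. compact L \<and> L \<noteq> {} \<and>
      L = (\<lambda>x. z * x) ` L \<union> (\<lambda>x. z * (x - 1) + 1) ` L)"

definition connectedness_locus :: "complex set" where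
  "connectedness_locus = {z. 0 < norm z \<and> norm z < 1 \<and> connected (attractor z)}"

end

theory Submission
  imports Defs
begin

definition HH :: "complex \<Rightarrow> complex set \<Rightarrow> complex set" where
  "HH z L = (\<lambda>x. z * x) ` L \<union> (\<lambda>x. z * (x - 1) + 1) ` L"

lemma HH_mono: "L \<subseteq> L' \<Longrightarrow> HH z L \<subseteq> HH z L'"
  unfolding HH_def by auto

lemma sub_lemma:
  assumes z: "norm z < 1" and b: "bounded L1" and s1: "L1 \<subseteq> HH z L1"
    and c: "closed L2" and ne: "L2 \<noteq> {}" and s2: "HH z L2 \<subseteq> L2"
  shows "L1 \<subseteq> L2"
proof
  fix p assume p: "p \<in> L1"
  obtain q0 where q0: "q0 \<in> L2" using ne by auto
  obtain M where M: "\<And>x. x \<in> L1 \<Longrightarrow> dist x q0 \<le> M"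
    using b bounded_any_center[of L1 q0] by (metis dist_commute)
  have key: "\<forall>p\<in>L1. \<exists>q\<in>L2. dist p q \<le> norm z ^ n * M" for n
  proof (induction n)
    case 0 then show ?case using M q0 by auto
  next
    case (Suc n)
    show ?case
    proof
      fix p assume "p \<in> L1"
      then have "p \<in> HH z L1" using s1 by auto
      then obtain p' where p': "p' \<in> L1" and
        "p = z * p' \<or> p = z * (p' - 1) + 1" unfolding HH_def by auto
      moreover obtain q' where q': "q' \<in> L2" "dist p' q' \<le> norm z ^ n * M"
        using Suc p' by auto
      ultimately consider "p = z * p'" | "p = z * (p' - 1) + 1" by auto
      then show "\<exists>q\<in>L2. dist p q \<le> norm z ^ Suc n * M"
      proof cases
        case 1
        have "z * q' \<in> L2" using s2 q' unfolding HH_def by auto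
        moreover have "dist p (z*q') = norm z * dist p' q'"
          using 1 by (simp add: dist_norm norm_mult[symmetric] algebra_simps)
        moreover have "norm z * dist p' q' \<le> norm z * (norm z ^ n * M)"
          using q' by (simp add: mult_left_mono)
        ultimately show ?thesis by (intro bexI[of _ "z*q'"]) auto
      next
        case 2
        have "z * (q' - 1) + 1 \<in> L2" using s2 q' unfolding HH_def by auto
        moreover have "dist p (z * (q' - 1) + 1) = norm z * dist p' q'"
          using 2 by (simp add: dist_norm norm_mult[symmetric] algebra_simps)
        moreover have "norm z * dist p' q' \<le> norm z * (norm z ^ n * M)"
          using q' by (simp add: mult_left_mono)
        ultimately show ?thesis by (intro bexI[of _ "z * (q' - 1) + 1"]) auto
      qed
    qed
  qed
  have "\<forall>e>0. \<exists>y\<in>L2. dist y p < e"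
  proof (intro allI impI)
    fix e :: real assume e: "e > 0"
    have "(\<lambda>n. norm z ^ n * M) \<longlonglongrightarrow> 0 * M"
      by (intro tendsto_mult LIMSEQ_power_zero tendsto_const) (use z in auto)
    then obtain n where "norm (norm z ^ n * M) < e"
      using e by (auto simp: LIMSEQ_iff)
    then have "norm z ^ n * M < e" by auto
    then obtain q where "q \<in> L2" "dist p q < e" using key[of n] p by force
    then show "\<exists>y\<in>L2. dist y p < e" by (auto simp: dist_commute)
  qed
  then show "p \<in> L2" using closed_approachable[OF c] by blast
qed

lemma HH_compact: "compact L \<Longrightarrow> compact (HH z L)"
  unfolding HH_def
  by (intro compact_Un compact_continuous_image continuous_intros) auto

lemma exists_attr:
  assumes z: "norm z < 1" "z \<noteq> 0"
  shows "\<exists>L. compact L \<and> L \<noteq> {} \<and> L = HH z L"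
proof -
  define R where "R = 2 / (1 - norm z)"
  have R: "R \<ge> 0" "norm z * R \<le> R" "norm z * (R + 1) + 1 \<le> R"
  proof -
    have p: "1 - norm z > 0" using z by auto
    show "R \<ge> 0" using p by (simp add: R_def)
    show "norm z * R \<le> R" using p \<open>R \<ge> 0\<close> z by (simp add: mult_left_le_one_le)
    have "R * (1 - norm z) = 2" using p unfolding R_def by (simp add: field_simps)
    then have "R - norm z * R = 2" by (simp add: algebra_simps)
    then show "norm z * (R + 1) + 1 \<le> R" using z by (simp add: distrib_left)
  qed
  define A where "A n = (HH z ^^ n) (cball 0 R)" for n
  have H0: "HH z (cball 0 R) \<subseteq> cball 0 R"
  proof
    fix y assume "y \<in> HH z (cball 0 R)"
    then obtain x where x: "norm x \<le> R" and "y = z * x \<or> y = z * (x - 1) + 1"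
      unfolding HH_def by auto
    then consider "y = z * x" | "y = z * (x - 1) + 1" by auto
    then show "y \<in> cball 0 R"
    proof cases
      case 1
      have "norm y = norm z * norm x" using 1 by (simp add: norm_mult)
      also have "\<dots> \<le> norm z * R" using x by (simp add: mult_left_mono)
      finally show ?thesis using R by simp
    next
      case 2
      have "norm y \<le> norm (z * (x - 1)) + 1" using 2 norm_triangle_ineq[of "z*(x-1)" 1] by simp
      also have "norm (z * (x - 1)) = norm z * norm (x - 1)" by (simp add: norm_mult)
      also have "norm (x - 1) \<le> R + 1" using x norm_triangle_ineq4[of x 1] by simp
      then have "norm z * norm (x - 1) \<le> norm z * (R + 1)" by (simp add: mult_left_mono)
      finally show ?thesis using R by simp
    qed
  qed
  have dec: "A (Suc n) \<subseteq> A n" for n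
  proof (induction n)
    case 0 then show ?case using H0 by (simp add: A_def)
  next
    case (Suc n)
    have "HH z (A (Suc n)) \<subseteq> HH z (A n)" by (rule HH_mono[OF Suc])
    then show ?case by (simp add: A_def)
  qed
  have decle: "m \<le> n \<Longrightarrow> A n \<subseteq> A m" for m n
    by (induction n rule: dec_induct) (use dec in auto)
  have cpt: "compact (A n)" for n
    unfolding A_def by (induction n) (simp_all add: HH_compact)
  have ne: "A n \<noteq> {}" for n
  proof (induction n)
    case 0 show ?case using R(1) by (simp add: A_def)
  next
    case (Suc n)
    then show ?case unfolding A_def HH_def by simp
  qed
  define L where "L = \<Inter>(range A)"
  have Lne: "L \<noteq> {}" unfolding L_def by (rule compact_nest) (use cpt ne decle in auto)
  have Lc: "compact L"
  proof -
    have "closed L" unfolding L_def using cpt by (intro closed_INT) (auto intro: compact_imp_closed)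
    moreover have "bounded L" using bounded_subset[of "A 0" L] compact_imp_bounded[OF cpt[of 0]]
      unfolding L_def by auto
    ultimately show ?thesis by (simp add: compact_eq_bounded_closed)
  qed
  have AS: "A (Suc n) = HH z (A n)" for n by (simp add: A_def)
  have "HH z L \<subseteq> L"
  proof -
    have "HH z L \<subseteq> A n" for n
    proof -
      have "HH z L \<subseteq> HH z (A n)" by (rule HH_mono) (auto simp: L_def)
      then show ?thesis using AS dec by blast
    qed
    then show ?thesis unfolding L_def by blast
  qed
  moreover have "L \<subseteq> HH z L"
  proof
    fix x assume x: "x \<in> L"
    have inv1: "z * (x / z) = x" using z by simp
    have inv2: "z * (((x - 1) / z + 1) - 1) + 1 = x" using z by simp
    have "\<forall>n. x / z \<in> A n \<or> (x - 1) / z + 1 \<in> A n"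
    proof
      fix n
      have "x \<in> A (Suc n)" using x unfolding L_def by blast
      then obtain y where y: "y \<in> A n" and "x = z * y \<or> x = z * (y - 1) + 1"
        unfolding AS HH_def by blast
      then consider "x = z * y" | "x = z * (y - 1) + 1" by auto
      then show "x / z \<in> A n \<or> (x - 1) / z + 1 \<in> A n"
      proof cases
        case 1 then have "y = x / z" using z by auto
        then show ?thesis using y by auto
      next
        case 2 then have "x - 1 = z * (y - 1)" by simp
        then have "(x - 1) / z = y - 1" using z by simp
        then have "y = (x - 1) / z + 1" by simp
        then show ?thesis using y by auto
      qed
    qed
    have "(\<forall>n. x / z \<in> A n) \<or> (\<forall>n. (x - 1) / z + 1 \<in> A n)"
    proof (rule ccontr)
      assume "\<not> ?thesis"
      then obtain m k where m: "x / z \<notin> A m" and k: "(x - 1) / z + 1 \<notin> A k" by auto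
      have "x / z \<notin> A (max m k)" using m decle[of m "max m k"] by (meson max.cobounded1 subsetD)
      moreover have "(x - 1) / z + 1 \<notin> A (max m k)" using k decle[of k "max m k"] by (meson max.cobounded2 subsetD)
      ultimately show False using \<open>\<forall>n. _\<close> by blast
    qed
    then have "x / z \<in> L \<or> (x - 1) / z + 1 \<in> L" unfolding L_def by auto
    then show "x \<in> HH z L"
    proof
      assume "x / z \<in> L"
      then have "z * (x / z) \<in> (\<lambda>x. z * x) ` L" by blast
      then show ?thesis unfolding HH_def inv1 by blast
    next
      assume "(x - 1) / z + 1 \<in> L"
      then have "z * (((x - 1) / z + 1) - 1) + 1 \<in> (\<lambda>x. z * (x - 1) + 1) ` L" by blast
      then show ?thesis unfolding HH_def inv2 by blast
    qed
  qed
  ultimately show ?thesis using Lc Lne by blast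
qed

lemma attr_props:
  assumes z: "norm z < 1" "z \<noteq> 0"
  shows "compact (attractor z) \<and> attractor z \<noteq> {} \<and> attractor z = HH z (attractor z)"
proof -
  have ex1: "\<exists>!L. compact L \<and> L \<noteq> {} \<and> L = HH z L"
  proof -
    obtain L where L: "compact L \<and> L \<noteq> {} \<and> L = HH z L" using exists_attr[OF z] by blast
    moreover have "L' = L" if L': "compact L' \<and> L' \<noteq> {} \<and> L' = HH z L'" for L'
    proof
      show "L' \<subseteq> L"
        by (rule sub_lemma[of z]) (use L L' z in \<open>blast intro: compact_imp_bounded compact_imp_closed\<close>)+
      show "L \<subseteq> L'"
        by (rule sub_lemma[of z]) (use L L' z in \<open>blast intro: compact_imp_bounded compact_imp_closed\<close>)+
    qed
    ultimately show ?thesis by blast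
  qed
  have "attractor z = (THE L. compact L \<and> L \<noteq> {} \<and> L = HH z L)"
    unfolding attractor_def HH_def by simp
  show ?thesis unfolding \<open>attractor z = _\<close> by (rule theI'[OF ex1])
qed

lemma grow_unbounded:
  fixes T :: "complex set" and \<phi> :: "complex \<Rightarrow> real"
  assumes bT: "\<forall>t\<in>T. \<phi> t \<le> B" and c: "c > 0"
    and step: "\<And>t. t \<in> T \<Longrightarrow> \<phi> t \<ge> m \<Longrightarrow> \<exists>t'\<in>T. \<phi> t' \<ge> \<phi> t + c"
    and t0: "t0 \<in> T" "\<phi> t0 \<ge> m"
  shows False
proof -
  have "\<exists>t\<in>T. \<phi> t \<ge> \<phi> t0 + c * real k" for k
  proof (induction k)
    case 0 then show ?case using t0 by auto
  next
    case (Suc k)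
    then obtain t where t: "t \<in> T" "\<phi> t \<ge> \<phi> t0 + c * real k" by auto
    have "\<phi> t \<ge> m" using t t0 c by (smt (verit) mult_nonneg_nonneg of_nat_0_le_iff)
    then obtain t' where "t' \<in> T" "\<phi> t' \<ge> \<phi> t + c" using step t by blast
    then show ?case using t by (intro bexI[of _ t']) (auto simp: algebra_simps)
  qed
  moreover obtain k :: nat where "real k > (B - \<phi> t0) / c" using reals_Archimedean2 by blast
  then have "c * real k > B - \<phi> t0" using c by (simp add: field_simps)
  ultimately obtain t where "t \<in> T" "\<phi> t \<ge> \<phi> t0 + c * real k" by blast
  then show False using bT \<open>c * real k > B - \<phi> t0\<close> by fastforce
qed

lemma escape:
  fixes w :: complex and T :: "complex set"
  assumes bT: "bounded T"
    and step: "\<And>t. t \<in> T \<Longrightarrow> \<exists>e\<in>{-1,0,1::complex}. w * t - e \<in> T"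
    and a: "Re w \<ge> 19/10" and b: "Im w \<noteq> 0"
  shows "1 \<notin> T"
proof
  assume one: "1 \<in> T"
  obtain B where B: "\<forall>t\<in>T. norm t \<le> B" using bT by (auto simp: bounded_iff)
  have nw: "norm w \<ge> 19/10" using a abs_Re_le_cmod[of w] by linarith
  have ne: "norm e \<le> 1" if "e \<in> {-1,0,1::complex}" for e using that by auto
  have Ime: "Im e = 0" if "e \<in> {-1,0,1::complex}" for e using that by auto
  have L1: "norm t < 3/2" if t: "t \<in> T" for t
  proof (rule ccontr)
    assume "\<not> norm t < 3/2"
    then have t0: "norm t \<ge> 3/2" by simp
    show False
    proof (rule grow_unbounded[of T norm B "7/20" "3/2" t])
      show "\<forall>t\<in>T. norm t \<le> B" using B by auto
      fix s assume s: "s \<in> T" "norm s \<ge> 3/2"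
      then obtain e where e: "e \<in> {-1,0,1::complex}" "w * s - e \<in> T" using step by blast
      have "norm (w * s - e) \<ge> norm (w * s) - norm e" by (rule norm_triangle_ineq2)
      moreover have "norm (w * s) = norm w * norm s" by (simp add: norm_mult)
      moreover have "norm w * norm s \<ge> 19/10 * norm s" using nw by (intro mult_right_mono) auto
      ultimately have "norm (w * s - e) \<ge> norm s + 7/20" using ne[OF e(1)] s(2) by linarith
      then show "\<exists>t'\<in>T. norm t' \<ge> norm s + 7/20" using e by blast
    qed (use t t0 in auto)
  qed
  have L2: "\<bar>Im t\<bar> < 2 * \<bar>Im w\<bar>" if t: "t \<in> T" for t
  proof (rule ccontr)
    assume "\<not> \<bar>Im t\<bar> < 2 * \<bar>Im w\<bar>"
    then have t0: "\<bar>Im t\<bar> \<ge> 2 * \<bar>Im w\<bar>" by simp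
    show False
    proof (rule grow_unbounded[of T "\<lambda>t. \<bar>Im t\<bar>" B "3/10 * \<bar>Im w\<bar>" "2 * \<bar>Im w\<bar>" t])
      show "\<forall>t\<in>T. \<bar>Im t\<bar> \<le> B" using B abs_Im_le_cmod order_trans by blast
      show "3/10 * \<bar>Im w\<bar> > 0" using b by simp
      fix s assume s: "s \<in> T" "\<bar>Im s\<bar> \<ge> 2 * \<bar>Im w\<bar>"
      then obtain e where e: "e \<in> {-1,0,1::complex}" "w * s - e \<in> T" using step by blast
      have im: "Im (w * s - e) = Re w * Im s + Im w * Re s" using Ime[OF e(1)] by simp
      have rs: "\<bar>Re s\<bar> \<le> 3/2" using L1[OF s(1)] abs_Re_le_cmod[of s] by linarith
      have "\<bar>Im w * Re s\<bar> \<le> \<bar>Im w\<bar> * (3/2)" 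
        unfolding abs_mult by (rule mult_left_mono[OF rs]) simp
      moreover have "\<bar>Re w * Im s\<bar> \<ge> 19/10 * \<bar>Im s\<bar>" 
        unfolding abs_mult by (rule mult_right_mono) (use a in auto)
      ultimately have "\<bar>Im (w * s - e)\<bar> \<ge> \<bar>Im s\<bar> + 3/10 * \<bar>Im w\<bar>"
        unfolding im using s(2) by linarith
      then show "\<exists>t'\<in>T. \<bar>Im t'\<bar> \<ge> \<bar>Im s\<bar> + 3/10 * \<bar>Im w\<bar>" using e by blast
    qed (use t t0 in auto)
  qed
  obtain e0 where e0: "e0 \<in> {-1,0,1::complex}" "w * 1 - e0 \<in> T" using step[OF one] by blast
  obtain e1 where e1: "e1 \<in> {-1,0,1::complex}" "w * (w * 1 - e0) - e1 \<in> T" using step[OF e0(2)] by blast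
  have "Im (w * (w * 1 - e0) - e1) = Im w * (2 * Re w - Re e0)"
    using Ime[OF e0(1)] Ime[OF e1(1)] by (simp add: algebra_simps)
  moreover have "Re e0 \<le> 1" using e0(1) by auto
  then have g: "2 * Re w - Re e0 \<ge> 2" using a by linarith
  have "\<bar>Im w\<bar> * 2 \<le> \<bar>Im w\<bar> * (2 * Re w - Re e0)" by (rule mult_left_mono[OF g]) simp
  moreover have "\<bar>Im w * (2 * Re w - Re e0)\<bar> = \<bar>Im w\<bar> * (2 * Re w - Re e0)"
    using g by (simp add: abs_mult)
  ultimately have "\<bar>Im (w * (w * 1 - e0) - e1)\<bar> \<ge> 2 * \<bar>Im w\<bar>"
    using \<open>Im (w * (w * 1 - e0) - e1) = _\<close> by simp
  then show False using L2[OF e1(2)] by linarith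
qed


lemma diff_eq_aux:
  fixes z a b t k :: complex
  assumes z: "z \<noteq> 0" and h: "z * a - z * b + k * (1 - z) = (1 - z) / z * t"
  shows "a - b = (1 - z) / z * (1 / z * t - k)"
proof -
  have "z * (a - b) = (1 - z) / z * t - k * (1 - z)" using h by (simp add: algebra_simps)
  then have "a - b = ((1 - z) / z * t - k * (1 - z)) / z" using z by (simp add: field_simps)
  also have "\<dots> = (1 - z) / z * (1 / z * t - k)" using z by (simp add: field_simps)
  finally show ?thesis .
qed

lemma disconn_if_disjoint:
  assumes z: "norm z < 1" "z \<noteq> 0"
    and dis: "(\<lambda>x. z * x) ` attractor z \<inter> (\<lambda>x. z * (x - 1) + 1) ` attractor z = {}"
  shows "\<not> connected (attractor z)"
proof -
  let ?L = "attractor z"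
  have P: "compact ?L" "?L \<noteq> {}" "?L = HH z ?L" using attr_props[OF z] by auto
  have c1: "closed ((\<lambda>x. z * x) ` ?L)"
    by (intro compact_imp_closed compact_continuous_image continuous_intros P(1))
  have c2: "closed ((\<lambda>x. z * (x - 1) + 1) ` ?L)"
    by (intro compact_imp_closed compact_continuous_image continuous_intros P(1))
  have sub: "?L \<subseteq> (\<lambda>x. z * x) ` ?L \<union> (\<lambda>x. z * (x - 1) + 1) ` ?L"
    using P(3) unfolding HH_def by blast
  have n1: "(\<lambda>x. z * x) ` ?L \<inter> ?L \<noteq> {}"
  proof -
    obtain p where "p \<in> ?L" using P(2) by auto
    then have "z * p \<in> HH z ?L" unfolding HH_def by blast
    then have "z * p \<in> ?L" using P(3) by simp
    then show ?thesis using \<open>p \<in> ?L\<close> by blast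
  qed
  have n2: "(\<lambda>x. z * (x - 1) + 1) ` ?L \<inter> ?L \<noteq> {}"
  proof -
    obtain p where "p \<in> ?L" using P(2) by auto
    then have "z * (p - 1) + 1 \<in> HH z ?L" unfolding HH_def by blast
    then have "z * (p - 1) + 1 \<in> ?L" using P(3) by simp
    then show ?thesis using \<open>p \<in> ?L\<close> by blast
  qed
  show ?thesis unfolding connected_closed
    using c1 c2 sub n1 n2 dis by blast
qed

lemma nonreal_disconn:
  assumes z: "norm z < 1" "z \<noteq> 0" and re: "Re (1 / z) \<ge> 19/10" and im: "Im z \<noteq> 0"
  shows "\<not> connected (attractor z)"
proof (rule disconn_if_disjoint[OF z])
  let ?L = "attractor z"
  have P: "compact ?L" "?L \<noteq> {}" "?L = HH z ?L" using attr_props[OF z] by auto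
  have z1: "z \<noteq> 1" using z by auto
  define c where "c = (1 - z) / z"
  have c0: "c \<noteq> 0" using z z1 by (simp add: c_def)
  define T where "T = {t. \<exists>p\<in>?L. \<exists>q\<in>?L. p - q = c * t}"
  have bT: "bounded T"
  proof -
    obtain B where B: "\<forall>x\<in>?L. norm x \<le> B" using compact_imp_bounded[OF P(1)] by (auto simp: bounded_iff)
    have "norm t \<le> 2 * B / norm c" if tT: "t \<in> T" for t
    proof -
      obtain p q where pq: "p \<in> ?L" "q \<in> ?L" "p - q = c * t" using tT unfolding T_def by blast
      have "norm c * norm t = norm (p - q)" using pq by (simp add: norm_mult)
      also have "\<dots> \<le> norm p + norm q" by (rule norm_triangle_ineq4)
      also have "\<dots> \<le> 2 * B" using B pq(1,2) by (smt (verit))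
      finally show ?thesis using c0 by (simp add: field_simps)
    qed
    then show ?thesis by (auto simp: bounded_iff)
  qed
  have step: "\<exists>e\<in>{-1,0,1::complex}. (1/z) * t - e \<in> T" if tT: "t \<in> T" for t
  proof -
    obtain p q where pq: "p \<in> ?L" "q \<in> ?L" "p - q = c * t" using tT unfolding T_def by blast
    have "p \<in> HH z ?L" "q \<in> HH z ?L" using pq P(3) by auto
    then obtain p' q' where p': "p' \<in> ?L" "p = z * p' \<or> p = z * (p' - 1) + 1"
      and q': "q' \<in> ?L" "q = z * q' \<or> q = z * (q' - 1) + 1" unfolding HH_def by blast
    have "\<exists>k\<in>{-1,0,1::complex}. z * p' - z * q' + k * (1 - z) = c * t"
      using p'(2) q'(2) pq(3)
      by (elim disjE) (rule bexI[where x=0] bexI[where x=1] bexI[where x="-1"];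
          auto simp: algebra_simps)+
    then obtain k where k: "k \<in> {-1,0,1::complex}" "z * p' - z * q' + k * (1 - z) = (1 - z) / z * t"
      unfolding c_def by blast
    have "p' - q' = c * (1 / z * t - k)" unfolding c_def by (rule diff_eq_aux[OF z(2) k(2)])
    then have "1 / z * t - k \<in> T" using p'(1) q'(1) unfolding T_def by blast
    then show ?thesis using k(1) by blast
  qed
  have imw: "Im (1 / z) \<noteq> 0" using im z by (simp add: Im_divide)
  have "1 \<notin> T" by (rule escape[OF bT step re imw])
  then show "(\<lambda>x. z * x) ` ?L \<inter> (\<lambda>x. z * (x - 1) + 1) ` ?L = {}"
  proof (safe)
    fix p q assume pq: "p \<in> ?L" "q \<in> ?L" "z * p = z * (q - 1) + 1"
    have "z * (p - q) = 1 - z" using pq(3) by (simp add: algebra_simps)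
    then have "p - q = c * 1" using z(2) unfolding c_def by (simp add: field_simps)
    then have "1 \<in> T" using pq unfolding T_def by blast
    then show "z * p \<in> {}" using \<open>1 \<notin> T\<close> by blast
  qed
qed


definition II :: "complex set" where "II = complex_of_real ` {0..1}"

lemma II_props: "closed II" "II \<noteq> {}" "connected II"
proof -
  show "closed II" unfolding II_def
    by (intro compact_imp_closed compact_continuous_image continuous_intros) auto
  show "II \<noteq> {}" unfolding II_def by auto
  show "connected II" unfolding II_def
    by (intro connected_continuous_image continuous_intros) auto
qed

lemma HH_II_sub:
  assumes x: "0 < x" "x < 1"
  shows "HH (complex_of_real x) II \<subseteq> II"
proof
  fix y assume "y \<in> HH (complex_of_real x) II"
  then obtain s where s: "0 \<le> s" "s \<le> 1" and
    "y = of_real x * of_real s \<or> y = of_real x * (of_real s - 1) + 1"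
    unfolding HH_def II_def by auto
  then consider "y = of_real (x * s)" | "y = of_real (x * (s - 1) + 1)" by auto
  then show "y \<in> II"
  proof cases
    case 1
    have "0 \<le> x * s" "x * s \<le> 1" using x s by (auto simp: mult_le_one)
    then show ?thesis unfolding 1 II_def by (intro image_eqI[OF refl]) auto
  next
    case 2
    have "x * (1 - s) \<le> 1" using x s by (auto simp: mult_le_one)
    moreover have "x * (1 - s) \<ge> 0" using x s by auto
    ultimately have "0 \<le> x * (s - 1) + 1" "x * (s - 1) + 1 \<le> 1" by (auto simp: algebra_simps)
    then show ?thesis unfolding 2 II_def by (intro image_eqI[OF refl]) auto
  qed
qed

lemma real_small_disconn:
  assumes x: "0 < x" "x < 1/2"
  shows "\<not> connected (attractor (complex_of_real x))"
proof -
  let ?z = "complex_of_real x"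
  have z: "norm ?z < 1" "?z \<noteq> 0" using x by auto
  let ?L = "attractor ?z"
  have P: "compact ?L" "?L \<noteq> {}" "?L = HH ?z ?L" using attr_props[OF z] by auto
  have sub: "?L \<subseteq> II"
    by (rule sub_lemma[OF z(1)]) (use P(1) equalityD1[OF P(3)] II_props HH_II_sub[of x] x in \<open>auto intro: compact_imp_bounded\<close>)
  show ?thesis
  proof (rule disconn_if_disjoint[OF z], safe)
    fix p q assume pq: "p \<in> ?L" "q \<in> ?L" "?z * p = ?z * (q - 1) + 1"
    obtain s where s: "0 \<le> s" "s \<le> 1" "p = of_real s" using sub pq(1) unfolding II_def by auto
    obtain r where r: "0 \<le> r" "r \<le> 1" "q = of_real r" using sub pq(2) unfolding II_def by auto
    have "x * s = x * (r - 1) + 1" using pq(3) s(3) r(3)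
      by (metis (mono_tags, opaque_lifting) of_real_1 of_real_add of_real_diff of_real_eq_iff of_real_mult)
    moreover have "x * s \<le> x" using x s by (simp add: mult_left_le)
    moreover have "x * (1 - r) \<le> x" using x r by (simp add: mult_left_le)
    moreover have "x * (r - 1) + 1 = 1 - x * (1 - r)" by (simp add: algebra_simps)
    ultimately have False using x by linarith
    then show "?z * p \<in> {}" by simp
  qed
qed

lemma real_big_conn:
  assumes x: "1/2 \<le> x" "x < 1"
  shows "connected (attractor (complex_of_real x))"
proof -
  let ?z = "complex_of_real x"
  have z: "norm ?z < 1" "?z \<noteq> 0" using x by auto
  let ?L = "attractor ?z"
  have P: "compact ?L" "?L \<noteq> {}" "?L = HH ?z ?L" using attr_props[OF z] by auto
  have sub: "?L \<subseteq> II"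
    by (rule sub_lemma[OF z(1)]) (use P(1) equalityD1[OF P(3)] II_props HH_II_sub[of x] x in \<open>auto intro: compact_imp_bounded\<close>)
  have sup: "II \<subseteq> HH ?z II"
  proof
    fix y assume "y \<in> II"
    then obtain s where s: "0 \<le> s" "s \<le> 1" "y = of_real s" unfolding II_def by auto
    show "y \<in> HH ?z II"
    proof (cases "s \<le> x")
      case True
      have "s / x \<in> {0..1}" using True s x by auto
      moreover have "y = ?z * of_real (s / x)" using s x by simp
      ultimately show ?thesis unfolding HH_def II_def by blast
    next
      case False
      define u where "u = 1 - (1 - s) / x"
      have "x * (u - 1) + 1 = s" using x by (simp add: u_def)
      moreover have "u \<le> 1" using s x by (simp add: u_def)
      moreover have "0 \<le> u"
      proof -
        have "1 - s \<le> x" using False x by linarith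
        then have "(1 - s) / x \<le> 1" using x by simp
        then show ?thesis unfolding u_def by linarith
      qed
      ultimately have "y = of_real (x * (u - 1) + 1)" "u \<in> {0..1}"
        using s by auto
      then have "y = ?z * (of_real u - 1) + 1" "u \<in> {0..1}" by simp_all
      then show ?thesis unfolding HH_def II_def by blast
    qed
  qed
  have bII: "bounded II" using II_props(1) unfolding II_def
    by (intro compact_imp_bounded compact_continuous_image continuous_intros) auto
  have "II \<subseteq> ?L"
    by (rule sub_lemma[OF z(1)]) (use P(1,2) equalityD2[OF P(3)] bII sup in \<open>auto intro: compact_imp_closed\<close>)
  then have "?L = II" using sub by blast
  then show ?thesis using II_props by simp
qed


lemma ball_facts:
  fixes z :: complex
  assumes d: "dist (1/2) z < 1/200"
  shows "Re (1 / z) \<ge> 19/10" "z \<noteq> 0" "norm z < 1" "Re z > 1/2 - 1/200" "Re z < 1/2 + 1/200"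
proof -
  let ?x = "Re z" and ?y = "Im z"
  have n: "norm (z - 1/2) < 1/200" using d by (simp add: dist_norm norm_minus_commute)
  have "(norm (z - 1/2))^2 < (1/200)^2" using n by (intro power_strict_mono) auto
  moreover have "(norm (z - 1/2))^2 = (?x - 1/2)^2 + ?y^2" by (simp add: cmod_power2)
  ultimately have q: "(?x - 1/2)^2 + ?y^2 < 1/40000" by (simp add: power2_eq_square)
  have rx: "\<bar>?x - 1/2\<bar> < 1/200" using n abs_Re_le_cmod[of "z - 1/2"] by simp
  then show "Re z > 1/2 - 1/200" "Re z < 1/2 + 1/200" by linarith+
  then show "z \<noteq> 0" by auto
  have "norm z \<le> norm (z - 1/2) + norm (1/2::complex)" using norm_triangle_ineq[of "z - 1/2" "1/2"] by simp
  then show "norm z < 1" using n by simp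
  have "?x^2 > 0" using \<open>Re z > 1/2 - 1/200\<close> by simp
  then have pos: "?x^2 + ?y^2 > 0" by (simp add: add_pos_nonneg)
  have e: "(?x - 1/2)^2 + ?y^2 = ?x^2 + ?y^2 - ?x + 1/4" by (simp add: power2_eq_square algebra_simps)
  have S: "?x^2 + ?y^2 < ?x - 1/4 + 1/40000" using q e by linarith
  have "19/10 * (?x^2 + ?y^2) \<le> ?x"
  proof -
    define S where "S = ?x^2 + ?y^2"
    have "S < ?x - 1/4 + 1/40000" using S by (simp add: S_def)
    then have "19/10 * S \<le> ?x" using \<open>Re z < 1/2 + 1/200\<close> by linarith
    then show ?thesis by (simp add: S_def)
  qed
  then have "19/10 \<le> ?x / (?x^2 + ?y^2)" using pos by (simp add: pos_le_divide_eq)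
  then show "Re (1 / z) \<ge> 19/10" by (simp add: Re_divide)
qed

theorem lemma10p1p1:
  shows "\<exists>\<alpha>::real. \<alpha> > 1/2 \<and> (\<exists>U::complex set. open U \<and>
           connectedness_locus \<inter> U = complex_of_real ` {1/2..<\<alpha>})"
proof (intro exI conjI)
  show "(1/2 + 1/200 :: real) > 1/2" by simp
  show "open (ball (1/2 :: complex) (1/200))" by simp
  show "connectedness_locus \<inter> ball (1/2) (1/200) = complex_of_real ` {1/2..<1/2 + 1/200}"
  proof safe
    fix z assume zM: "z \<in> connectedness_locus" and zb: "z \<in> ball (1/2 :: complex) (1/200)"
    have B: "Re (1 / z) \<ge> 19/10" "z \<noteq> 0" "norm z < 1" "Re z > 1/2 - 1/200" "Re z < 1/2 + 1/200"
      using ball_facts[of z] zb by (simp_all add: dist_commute)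
    have con: "connected (attractor z)" using zM by (simp add: connectedness_locus_def)
    have im: "Im z = 0"
      using nonreal_disconn[OF B(3) B(2) B(1)] con by metis
    then have zr: "z = complex_of_real (Re z)" by (simp add: complex_eq_iff)
    have "\<not> Re z < 1/2"
    proof
      assume "Re z < 1/2"
      then have "\<not> connected (attractor (complex_of_real (Re z)))"
        using B(4) by (intro real_small_disconn) auto
      then show False using con zr by simp
    qed
    then have "Re z \<in> {1/2..<1/2 + 1/200}" using B(5) by auto
    then show "z \<in> complex_of_real ` {1/2..<1/2 + 1/200}" using zr by blast
  next
    fix x :: real assume x: "x \<in> {1/2..<1/2 + 1/200}"
    have "connected (attractor (complex_of_real x))" using x by (intro real_big_conn) auto
    moreover have "0 < norm (complex_of_real x)" "norm (complex_of_real x) < 1" using x by auto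
    ultimately show "complex_of_real x \<in> connectedness_locus" by (simp add: connectedness_locus_def)
  next
    fix x :: real assume x: "x \<in> {1/2..<1/2 + 1/200}"
    have "dist (1/2 :: complex) (complex_of_real x) = \<bar>1/2 - x\<bar>"
    proof -
      have "(1/2 :: complex) - complex_of_real x = complex_of_real (1/2 - x)" by simp
      then show ?thesis by (simp only: dist_norm norm_of_real)
    qed
    then show "complex_of_real x \<in> ball (1/2) (1/200)" using x by auto
  qed
qed

end
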